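(* Let $(\mathscr N,K)$ be a power law kinetic system with a decomposition $\mathscr D:\mathscr N=\mathscr N_1\cup\cdots\cup\mathscr N_k$ such that each subsystem $(\mathscr N_i,K_i)$ is a weakly reversible, complex balanced PL-RDK system of CLP type with $P_{Z,i}=\widetilde S_i$. If $\mathscr D$ is incidence independent and the induced covering $\widetilde{\mathscr D}$ is independent, then $(\mathscr N,K)$ is a weakly reversible CLP system with $P_Z=\sum_{i=1}^k\widetilde S_i$.
   Context: A CRN $\mathscr N=(\mathscr S,\mathscr C,\mathscr R)$ has species $\mathscr S$, complexes $\mathscr C$ (vectors in $\mathbb Z_{\ge0}^{\mathscr S}$) and reactions $\mathscr R$; it is weakly reversible if every connected component of its reaction graph is strongly connected. A decomposition is given by a partition $\{\mathscr R_1,\dots,\mathscr R_k\}$ of $\mathscr R$, $\mathscr N_i$ having reactions $\mathscr R_i$ and complexes $\mathscr C_i$ those occurring in $\mathscr R_i$; $K_i$ is the restriction of the kinetics $K$ to $\mathscr R_i$. A power law kinetics assigns to reaction $R_j$ the rate $K_j(x)=k_jx^{F_{j,\cdot}}=k_j\prod_{s}x_s^{F_{js}}$ with $k_j>0$ and real kinetic order matrix $F$ (rows indexed by reactions). It is PL-RDK (reactant-determined) if any two reactions with the same reactant complex have identical rows of $F$; then each reactant complex $y$ has a kinetic complex $\widetilde y$ (the common row). The incidence map $I_a:\mathbb R^{\mathscr R}\to\mathbb R^{\mathscr C}$ sends $y\to y'$ to $\omega_{y'}-\omega_y$; $Z_+(\mathscr N,K)=\{x\in\mathbb R^{\mathscr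 S}_{>0}: I_aK(x)=0\}$ is the set of complex balanced equilibria, and the system is complex balanced if this set is nonempty. A system is of CLP type with subspace $P_Z\subseteq\mathbb R^{\mathscr S}$ if $Z_+\neq\varnothing$ and $Z_+=\{x\in\mathbb R^{\mathscr S}_{>0}:\log x-\log x^*\in P_Z^{\perp}\}$ for some (any) $x^*\in Z_+$. For a weakly reversible PL-RDK subsystem $(\mathscr N_i,K_i)$, its network of kinetic complexes $\widetilde{\mathscr N}_i$ has reactions $\widetilde y\to\widetilde{y'}$ for each $y\to y'\in\mathscr R_i$, and its kinetic order subspace is $\widetilde S_i=\operatorname{span}\{\widetilde{y'}-\widetilde y: y\to y'\in\mathscr R_i\}$. The induced covering $\widetilde{\mathscr D}$ is $\widetilde{\mathscr N}_{\mathscr D}=\widetilde{\mathscr N}_1\cup\cdots\cup\widetilde{\mathscr N}_k$; it is independent if the stoichiometric subspace of $\widetilde{\mathscr N}_{\mathscr D}$ (which is $\sum_i\widetilde S_i$) is the direct sum of the $\widetilde S_i$. $\mathscr D$ is incidence independent if $\operatorname{Im}I_a$ is the direct sum of the images of the incidence maps of the $\mathscr N_i$. *)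

theory Defs
  imports Complex_Main
begin

text \<open>
Model of a CRN: species form a finite type 's; complexes are vectors 's \<Rightarrow> nat;
reactions are indexed by elements of a finite set R of some type 'r, where
reaction r is  src r \<rightarrow> tgt r.  A power law kinetics is given by rate
constants k :: 'r \<Rightarrow> real and a kinetic order matrix F :: 'r \<Rightarrow> 's \<Rightarrow> real
(row F r).  A subnetwork is given by a subset of reactions; its complexes are
those occurring in its reactions, and its kinetics is the restriction.
\<close>

type_synonym 's complex = "'s \<Rightarrow> nat"

definition complexes :: "'r set \<Rightarrow> ('r \<Rightarrow> 's complex) \<Rightarrow> ('r \<Rightarrow> 's complex) \<Rightarrow> 's complex set" where
  "complexes R src tgt = src ` R \<union> tgt ` R"

definition reaction_graph :: "'r set \<Rightarrow> ('r \<Rightarrow> 's complex) \<Rightarrow> ('r \<Rightarrow> 's complex) \<Rightarrow> ('s complex \<times> 's complex) set" where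
  "reaction_graph R src tgt = {(src r, tgt r) | r. r \<in> R}"

definition weakly_reversible :: "'r set \<Rightarrow> ('r \<Rightarrow> 's complex) \<Rightarrow> ('r \<Rightarrow> 's complex) \<Rightarrow> bool" where
  "weakly_reversible R src tgt \<longleftrightarrow>
     (\<forall>c1 \<in> complexes R src tgt. \<forall>c2 \<in> complexes R src tgt.
        (c1, c2) \<in> (reaction_graph R src tgt \<union> (reaction_graph R src tgt)\<inverse>)\<^sup>* \<longrightarrow>
        (c1, c2) \<in> (reaction_graph R src tgt)\<^sup>*)"

text \<open>Incidence map I_a : R^R \<rightarrow> R^C, sending the basis vector of y \<rightarrow> y' to
\<omega>_{y'} - \<omega>_y (vectors over complexes represented as functions, zero off C).\<close>
definition incidence :: "'r set \<Rightarrow> ('r \<Rightarrow> 's complex) \<Rightarrow> ('r \<Rightarrow> 's complex) \<Rightarrow> ('r \<Rightarrow> real) \<Rightarrow> ('s complex \<Rightarrow> real)" where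
  "incidence R src tgt v =
     (\<lambda>c. \<Sum>r\<in>R. v r * ((if tgt r = c then 1 else 0) - (if src r = c then 1 else 0)))"

definition incidence_image :: "'r set \<Rightarrow> ('r \<Rightarrow> 's complex) \<Rightarrow> ('r \<Rightarrow> 's complex) \<Rightarrow> ('s complex \<Rightarrow> real) set" where
  "incidence_image R src tgt = range (incidence R src tgt)"

definition PL_rate :: "('r \<Rightarrow> real) \<Rightarrow> ('r \<Rightarrow> 's \<Rightarrow> real) \<Rightarrow> ('s::finite \<Rightarrow> real) \<Rightarrow> 'r \<Rightarrow> real" where
  "PL_rate k F x r = k r * (\<Prod>s\<in>UNIV. x s powr F r s)"

definition positive_vec :: "('s \<Rightarrow> real) \<Rightarrow> bool" where
  "positive_vec x \<longleftrightarrow> (\<forall>s. x s > 0)"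

definition Zplus :: "'r set \<Rightarrow> ('r \<Rightarrow> ('s::finite) complex) \<Rightarrow> ('r \<Rightarrow> 's complex) \<Rightarrow> ('r \<Rightarrow> real) \<Rightarrow> ('r \<Rightarrow> 's \<Rightarrow> real) \<Rightarrow> ('s \<Rightarrow> real) set" where
  "Zplus R src tgt k F = {x. positive_vec x \<and> incidence R src tgt (PL_rate k F x) = (\<lambda>_. 0)}"

definition complex_balanced :: "'r set \<Rightarrow> ('r \<Rightarrow> ('s::finite) complex) \<Rightarrow> ('r \<Rightarrow> 's complex) \<Rightarrow> ('r \<Rightarrow> real) \<Rightarrow> ('r \<Rightarrow> 's \<Rightarrow> real) \<Rightarrow> bool" where
  "complex_balanced R src tgt k F \<longleftrightarrow> Zplus R src tgt k F \<noteq> {}"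

definition orth :: "('s::finite \<Rightarrow> real) set \<Rightarrow> ('s \<Rightarrow> real) set" where
  "orth P = {v. \<forall>p\<in>P. (\<Sum>s\<in>UNIV. v s * p s) = 0}"

definition CLP :: "'r set \<Rightarrow> ('r \<Rightarrow> ('s::finite) complex) \<Rightarrow> ('r \<Rightarrow> 's complex) \<Rightarrow> ('r \<Rightarrow> real) \<Rightarrow> ('r \<Rightarrow> 's \<Rightarrow> real) \<Rightarrow> ('s \<Rightarrow> real) set \<Rightarrow> bool" where
  "CLP R src tgt k F PZ \<longleftrightarrow>
     Zplus R src tgt k F \<noteq> {} \<and>
     (\<exists>xs \<in> Zplus R src tgt k F.
        Zplus R src tgt k F = {x. positive_vec x \<and> (\<lambda>s. ln (x s) - ln (xs s)) \<in> orth PZ})"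

definition PL_kinetics :: "'r set \<Rightarrow> ('r \<Rightarrow> real) \<Rightarrow> bool" where
  "PL_kinetics R k \<longleftrightarrow> (\<forall>r\<in>R. k r > 0)"

definition PL_RDK :: "'r set \<Rightarrow> ('r \<Rightarrow> 's complex) \<Rightarrow> ('r \<Rightarrow> 's \<Rightarrow> real) \<Rightarrow> bool" where
  "PL_RDK R src F \<longleftrightarrow> (\<forall>r1\<in>R. \<forall>r2\<in>R. src r1 = src r2 \<longrightarrow> F r1 = F r2)"

definition kinetic_complex :: "'r set \<Rightarrow> ('r \<Rightarrow> 's complex) \<Rightarrow> ('r \<Rightarrow> 's \<Rightarrow> real) \<Rightarrow> 's complex \<Rightarrow> ('s \<Rightarrow> real)" where
  "kinetic_complex R src F y = F (SOME r. r \<in> R \<and> src r = y)"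

text \<open>Kinetic order subspace: span of the kinetic complex differences (finite generating
set, so the span is the set of linear combinations indexed by reactions).\<close>
definition kinetic_order_subspace :: "'r set \<Rightarrow> ('r \<Rightarrow> 's complex) \<Rightarrow> ('r \<Rightarrow> 's complex) \<Rightarrow> ('r \<Rightarrow> 's \<Rightarrow> real) \<Rightarrow> ('s \<Rightarrow> real) set" where
  "kinetic_order_subspace R src tgt F =
     {v. \<exists>c :: 'r \<Rightarrow> real. v = (\<lambda>s. \<Sum>r\<in>R. c r *
            (kinetic_complex R src F (tgt r) s - kinetic_complex R src F (src r) s))}"

definition subspace_sum :: "'i set \<Rightarrow> ('i \<Rightarrow> ('a \<Rightarrow> real) set) \<Rightarrow> ('a \<Rightarrow> real) set" where
  "subspace_sum I V = {w. \<exists>v. (\<forall>i\<in>I. v i \<in> V i) \<and> w = (\<lambda>a. \<Sum>i\<in>I. v i a)}"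

definition independent_family :: "'i set \<Rightarrow> ('i \<Rightarrow> ('a \<Rightarrow> real) set) \<Rightarrow> bool" where
  "independent_family I V \<longleftrightarrow>
     (\<forall>v. (\<forall>i\<in>I. v i \<in> V i) \<and> (\<lambda>a. \<Sum>i\<in>I. v i a) = (\<lambda>_. 0) \<longrightarrow> (\<forall>i\<in>I. v i = (\<lambda>_. 0)))"

definition is_direct_sum :: "('a \<Rightarrow> real) set \<Rightarrow> 'i set \<Rightarrow> ('i \<Rightarrow> ('a \<Rightarrow> real) set) \<Rightarrow> bool" where
  "is_direct_sum W I V \<longleftrightarrow> W = subspace_sum I V \<and> independent_family I V"

definition is_decomposition :: "'r set \<Rightarrow> 'r set set \<Rightarrow> bool" where
  "is_decomposition R D \<longleftrightarrow>
     (\<forall>A\<in>D. A \<noteq> {}) \<and> (\<forall>A\<in>D. \<forall>B\<in>D. A \<noteq> B \<longrightarrow> A \<inter> B = {}) \<and> \<Union>D = R"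

definition incidence_independent :: "'r set \<Rightarrow> ('r \<Rightarrow> 's complex) \<Rightarrow> ('r \<Rightarrow> 's complex) \<Rightarrow> 'r set set \<Rightarrow> bool" where
  "incidence_independent R src tgt D \<longleftrightarrow>
     is_direct_sum (incidence_image R src tgt) D (\<lambda>A. incidence_image A src tgt)"

text \<open>The induced covering of kinetic complex networks is independent: the stoichiometric
subspace of the union, \<Sum>_i S~_i, is the direct sum of the S~_i.\<close>
definition covering_independent :: "('r \<Rightarrow> 's complex) \<Rightarrow> ('r \<Rightarrow> 's complex) \<Rightarrow> ('r \<Rightarrow> 's \<Rightarrow> real) \<Rightarrow> 'r set set \<Rightarrow> bool" where
  "covering_independent src tgt F D \<longleftrightarrow>
     is_direct_sum (subspace_sum D (\<lambda>A. kinetic_order_subspace A src tgt F)) D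
                   (\<lambda>A. kinetic_order_subspace A src tgt F)"

end

theory Submission imports Defs "HOL-Analysis.Analysis" begin
lemma lem2:
  fixes U V :: "'a::euclidean_space set"
  assumes sU: "subspace U" and sV: "subspace V" and int0: "U \<inter> V = {0}"
  shows "\<exists>a b. a \<in> orthogonal_comp U \<and> b \<in> orthogonal_comp V \<and> w = a + b"
proof -
  define S where "S = {x + y|x y. x \<in> orthogonal_comp U \<and> y \<in> orthogonal_comp V}"
  have sub: "subspace S" unfolding S_def by (intro subspace_sums subspace_orthogonal_comp)
  have "orthogonal_comp S \<subseteq> U \<inter> V"
  proof
    fix x assume x: "x \<in> orthogonal_comp S"
    have hU: "\<forall>y\<in>orthogonal_comp U. orthogonal y x"
    proof
      fix y assume "y \<in> orthogonal_comp U"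
      then have "y + 0 \<in> S" unfolding S_def using subspace_0[OF subspace_orthogonal_comp] by blast
      then show "orthogonal y x" using x unfolding orthogonal_comp_def by (auto simp: orthogonal_commute)
    qed
    have hV: "\<forall>y\<in>orthogonal_comp V. orthogonal y x"
    proof
      fix y assume "y \<in> orthogonal_comp V"
      then have "0 + y \<in> S" unfolding S_def using subspace_0[OF subspace_orthogonal_comp] by blast
      then show "orthogonal y x" using x unfolding orthogonal_comp_def by (auto simp: orthogonal_commute)
    qed
    have "x \<in> orthogonal_comp (orthogonal_comp U)" using hU unfolding orthogonal_comp_def by blast
    moreover have "x \<in> orthogonal_comp (orthogonal_comp V)" using hV unfolding orthogonal_comp_def by blast
    ultimately show "x \<in> U \<inter> V" using orthogonal_comp_self sU sV by blast
  qed
  then have "orthogonal_comp S \<subseteq> {0}" using int0 by simp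
  then have "orthogonal_comp {0} \<subseteq> orthogonal_comp (orthogonal_comp S)"
    by (rule orthogonal_comp_anti_mono)
  then have "UNIV \<subseteq> S" using orthogonal_comp_self[OF sub] by simp
  then have "w \<in> S" by blast
  then show ?thesis unfolding S_def by blast
qed

lemma span_union_sub:
  fixes V :: "'i \<Rightarrow> 'a::euclidean_space set"
  assumes "finite I" "\<And>i. i \<in> I \<Longrightarrow> subspace (V i)"
  shows "span (\<Union>i\<in>I. V i) \<subseteq> {w. \<exists>v. (\<forall>i\<in>I. v i \<in> V i) \<and> w = (\<Sum>i\<in>I. v i)}"
proof (rule span_minimal)
  show "(\<Union>i\<in>I. V i) \<subseteq> {w. \<exists>v. (\<forall>i\<in>I. v i \<in> V i) \<and> w = (\<Sum>i\<in>I. v i)}"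
  proof clarify
    fix i x assume i: "i \<in> I" and x: "x \<in> V i"
    let ?v = "\<lambda>j. if j = i then x else 0"
    have "\<forall>j\<in>I. ?v j \<in> V j" using x assms(2) subspace_0 by auto
    moreover have "x = (\<Sum>j\<in>I. ?v j)" using i assms(1) by (simp add: sum.delta)
    ultimately show "\<exists>v. (\<forall>i\<in>I. v i \<in> V i) \<and> x = (\<Sum>i\<in>I. v i)" by (intro exI[of _ ?v]) auto
  qed
  show "subspace {w. \<exists>v. (\<forall>i\<in>I. v i \<in> V i) \<and> w = (\<Sum>i\<in>I. v i)}"
    unfolding subspace_def
  proof (intro conjI allI impI ballI)
    show "0 \<in> {w. \<exists>v. (\<forall>i\<in>I. v i \<in> V i) \<and> w = (\<Sum>i\<in>I. v i)}"
      using assms(2) subspace_0 by (intro CollectI exI[of _ "\<lambda>_. 0"]) auto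
  next
    fix x y assume "x \<in> {w. \<exists>v. (\<forall>i\<in>I. v i \<in> V i) \<and> w = (\<Sum>i\<in>I. v i)}"
      "y \<in> {w. \<exists>v. (\<forall>i\<in>I. v i \<in> V i) \<and> w = (\<Sum>i\<in>I. v i)}"
    then obtain v1 v2 where "\<forall>i\<in>I. v1 i \<in> V i" "x = (\<Sum>i\<in>I. v1 i)" "\<forall>i\<in>I. v2 i \<in> V i" "y = (\<Sum>i\<in>I. v2 i)" by blast
    note v12 = this
    then show "x + y \<in> {w. \<exists>v. (\<forall>i\<in>I. v i \<in> V i) \<and> w = (\<Sum>i\<in>I. v i)}"
    proof -
      have "\<forall>i\<in>I. v1 i + v2 i \<in> V i" using v12 assms(2) subspace_add by blast
      then show ?thesis using v12 by (intro CollectI exI[of _ "\<lambda>i. v1 i + v2 i"]) (auto simp: sum.distrib)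
    qed
  next
    fix c :: real and x assume "x \<in> {w. \<exists>v. (\<forall>i\<in>I. v i \<in> V i) \<and> w = (\<Sum>i\<in>I. v i)}"
    then obtain v1 where v1: "\<forall>i\<in>I. v1 i \<in> V i" "x = (\<Sum>i\<in>I. v1 i)" by blast
    then show "c *\<^sub>R x \<in> {w. \<exists>v. (\<forall>i\<in>I. v i \<in> V i) \<and> w = (\<Sum>i\<in>I. v i)}"
    proof -
      have "\<forall>i\<in>I. c *\<^sub>R v1 i \<in> V i" using v1 assms(2) subspace_scale by blast
      then show ?thesis using v1 by (intro CollectI exI[of _ "\<lambda>i. c *\<^sub>R v1 i"]) (auto simp: scaleR_sum_right)
    qed
  qed
qed

lemma ext_lemma:
  fixes V :: "'i \<Rightarrow> 'a::euclidean_space set" and u :: "'i \<Rightarrow> 'a"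
  assumes "finite I" "\<And>i. i \<in> I \<Longrightarrow> subspace (V i)"
    and "\<And>v. (\<forall>i\<in>I. v i \<in> V i) \<Longrightarrow> (\<Sum>i\<in>I. v i) = 0 \<Longrightarrow> \<forall>i\<in>I. v i = 0"
  shows "\<exists>y. \<forall>i\<in>I. \<forall>x\<in>V i. y \<bullet> x = u i \<bullet> x"
  using assms
proof (induction I rule: finite_induct)
  case empty
  then show ?case by simp
next
  case (insert j I)
  have indI: "\<forall>i\<in>I. v i = 0" if "\<forall>i\<in>I. v i \<in> V i" "(\<Sum>i\<in>I. v i) = 0" for v
  proof -
    let ?v = "\<lambda>i. if i = j then 0 else v i"
    have "\<forall>i\<in>insert j I. ?v i \<in> V i" using that insert.prems(1) subspace_0 by auto
    moreover have "(\<Sum>i\<in>I. ?v i) = (\<Sum>i\<in>I. v i)" using insert.hyps by (intro sum.cong) auto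
    then have "(\<Sum>i\<in>insert j I. ?v i) = 0" using insert.hyps that by simp
    ultimately have "\<forall>i\<in>insert j I. ?v i = 0" using insert.prems(2)[of ?v] by blast
    then have "\<forall>i\<in>I. ?v i = 0" by blast
    moreover have "\<forall>i\<in>I. ?v i = v i" using insert.hyps(2) by auto
    ultimately show ?thesis by auto
  qed
  obtain y' where y': "\<forall>i\<in>I. \<forall>x\<in>V i. y' \<bullet> x = u i \<bullet> x"
    using insert.IH insert.prems(1) indI by auto
  define U where "U = span (\<Union>i\<in>I. V i)"
  have sU: "subspace U" unfolding U_def by simp
  have sV: "subspace (V j)" using insert.prems(1) by simp
  have "U \<inter> V j \<subseteq> {0}"
  proof
    fix x assume x: "x \<in> U \<inter> V j"
    then obtain v where v: "\<forall>i\<in>I. v i \<in> V i" "x = (\<Sum>i\<in>I. v i)"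
      using span_union_sub[OF insert.hyps(1), of V] insert.prems(1) unfolding U_def by blast
    let ?v = "\<lambda>i. if i = j then - x else v i"
    have "\<forall>i\<in>insert j I. ?v i \<in> V i" using v x sV subspace_neg by auto
    moreover have "(\<Sum>i\<in>I. ?v i) = (\<Sum>i\<in>I. v i)" using insert.hyps by (intro sum.cong) auto
    then have "(\<Sum>i\<in>insert j I. ?v i) = 0" using insert.hyps v by simp
    ultimately have "\<forall>i\<in>insert j I. ?v i = 0" using insert.prems(2)[of ?v] by blast
    then show "x \<in> {0}" by simp
  qed
  then have "U \<inter> V j = {0}" using subspace_0[OF sU] subspace_0[OF sV] by auto
  then obtain a b where ab: "a \<in> orthogonal_comp U" "b \<in> orthogonal_comp (V j)" "u j - y' = a + b"
    using lem2[OF sU sV] by blast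
  show ?case
  proof (intro exI[of _ "y' + a"] ballI)
    fix i x assume i: "i \<in> insert j I" and x: "x \<in> V i"
    show "(y' + a) \<bullet> x = u i \<bullet> x"
    proof (cases "i = j")
      case True
      have "b \<bullet> x = 0" using ab(2) x True unfolding orthogonal_comp_def orthogonal_def
        by (auto simp: inner_commute)
      moreover have "a = u j - y' - b" using ab(3) by simp
      ultimately show ?thesis using True by (simp add: inner_diff_left inner_add_left)
    next
      case False
      then have iI: "i \<in> I" using i by simp
      have "x \<in> U" unfolding U_def using iI x by (auto intro: span_base)
      then have "a \<bullet> x = 0" using ab(1) unfolding orthogonal_comp_def orthogonal_def
        by (auto simp: inner_commute)
      then show ?thesis using y' iI x by (simp add: inner_add_left)
    qed
  qed
qed

lemma fun_ext_lemma:
  fixes W :: "'i \<Rightarrow> ('s::finite \<Rightarrow> real) set" and u :: "'i \<Rightarrow> 's \<Rightarrow> real"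
  assumes fin: "finite I"
    and z: "\<And>i. i \<in> I \<Longrightarrow> (\<lambda>_. 0) \<in> W i"
    and ad: "\<And>i a b. i \<in> I \<Longrightarrow> a \<in> W i \<Longrightarrow> b \<in> W i \<Longrightarrow> (\<lambda>s. a s + b s) \<in> W i"
    and sc: "\<And>i a c. i \<in> I \<Longrightarrow> a \<in> W i \<Longrightarrow> (\<lambda>s. c * a s) \<in> W i"
    and ind: "independent_family I W"
  shows "\<exists>y. \<forall>i\<in>I. \<forall>w\<in>W i. (\<Sum>s\<in>UNIV. y s * w s) = (\<Sum>s\<in>UNIV. u i s * w s)"
proof -
  define V where "V i = (vec_lambda ` W i :: (real^'s) set)" for i
  have sub: "subspace (V i)" if i: "i \<in> I" for i
    unfolding subspace_def
  proof (intro conjI allI impI ballI)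
    have "(0::real^'s) = vec_lambda (\<lambda>_. 0)" by (simp add: vec_eq_iff)
    then show "(0::real^'s) \<in> V i" unfolding V_def using z[OF i] by blast
  next
    fix x y assume "x \<in> V i" "y \<in> V i"
    then obtain a b where ab: "a \<in> W i" "b \<in> W i" "x = vec_lambda a" "y = vec_lambda b"
      unfolding V_def by blast
    then have "x + y = vec_lambda (\<lambda>s. a s + b s)" by (simp add: vec_eq_iff)
    then show "x + y \<in> V i" unfolding V_def using ad[OF i ab(1,2)] by blast
  next
    fix c :: real and x assume "x \<in> V i"
    then obtain a where a: "a \<in> W i" "x = vec_lambda a" unfolding V_def by blast
    then have "c *\<^sub>R x = vec_lambda (\<lambda>s. c * a s)" by (simp add: vec_eq_iff)
    then show "c *\<^sub>R x \<in> V i" unfolding V_def using sc[OF i a(1)] by blast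
  qed
  have indV: "\<forall>i\<in>I. v i = 0" if v: "\<forall>i\<in>I. v i \<in> V i" "(\<Sum>i\<in>I. v i) = 0" for v
  proof -
    let ?v = "\<lambda>i. vec_nth (v i)"
    have "\<forall>i\<in>I. ?v i \<in> W i"
    proof
      fix i assume "i \<in> I"
      then obtain a where "a \<in> W i" "v i = vec_lambda a" using v unfolding V_def by blast
      moreover have "?v i = a" using \<open>v i = vec_lambda a\<close> by (simp add: fun_eq_iff)
      ultimately show "?v i \<in> W i" by simp
    qed
    moreover have "(\<lambda>a. \<Sum>i\<in>I. ?v i a) = (\<lambda>_. 0)"
    proof
      fix a
      have "(\<Sum>i\<in>I. ?v i a) = (\<Sum>i\<in>I. v i) $ a" by (simp add: sum_component)
      then show "(\<Sum>i\<in>I. ?v i a) = 0" using v(2) by simp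
    qed
    ultimately have "\<forall>i\<in>I. ?v i = (\<lambda>_. 0)" using mp[OF spec[OF ind[unfolded independent_family_def], of ?v]]
      by blast
    then show ?thesis by (simp add: vec_eq_iff fun_eq_iff)
  qed
  obtain y :: "real^'s" where y: "\<forall>i\<in>I. \<forall>x\<in>V i. y \<bullet> x = vec_lambda (u i) \<bullet> x"
    using ext_lemma[of I V "\<lambda>i. vec_lambda (u i)", OF fin sub indV] by blast
  show ?thesis
  proof (intro exI[of _ "vec_nth y"] ballI)
    fix i w assume i: "i \<in> I" and w: "w \<in> W i"
    then have "vec_lambda w \<in> V i" unfolding V_def by blast
    then have "y \<bullet> vec_lambda w = vec_lambda (u i) \<bullet> vec_lambda w" using y i by blast
    then show "(\<Sum>s\<in>UNIV. y $ s * w s) = (\<Sum>s\<in>UNIV. u i s * w s)"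
      by (simp add: inner_vec_def)
  qed
qed

lemma wr_union:
  assumes "\<Union>D = R" "\<And>A. A \<in> D \<Longrightarrow> weakly_reversible A src tgt"
  shows "weakly_reversible R src tgt"
proof -
  let ?G = "reaction_graph R src tgt"
  have "?G \<union> ?G\<inverse> \<subseteq> ?G\<^sup>*"
  proof
    fix p assume p: "p \<in> ?G \<union> ?G\<inverse>"
    show "p \<in> ?G\<^sup>*"
    proof (cases "p \<in> ?G")
      case True then show ?thesis by blast
    next
      case False
      then obtain r where r: "r \<in> R" "p = (tgt r, src r)" using p unfolding reaction_graph_def by blast
      then obtain A where A: "A \<in> D" "r \<in> A" using assms(1) by blast
      let ?GA = "reaction_graph A src tgt"
      have inA: "tgt r \<in> complexes A src tgt" "src r \<in> complexes A src tgt"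
        using A unfolding complexes_def by auto
      have "(src r, tgt r) \<in> ?GA" using A unfolding reaction_graph_def by blast
      then have "(tgt r, src r) \<in> (?GA \<union> ?GA\<inverse>)\<^sup>*" by blast
      then have "(tgt r, src r) \<in> ?GA\<^sup>*" using assms(2)[OF A(1)] inA unfolding weakly_reversible_def by blast
      moreover have "?GA \<subseteq> ?G" using A assms(1) unfolding reaction_graph_def by blast
      ultimately show ?thesis using r rtrancl_mono by blast
    qed
  qed
  then have "(?G \<union> ?G\<inverse>)\<^sup>* \<subseteq> ?G\<^sup>*" by (rule rtrancl_subset_rtrancl)
  then show ?thesis unfolding weakly_reversible_def by blast
qed

lemma KOS_zero: "(\<lambda>_. 0) \<in> kinetic_order_subspace A src tgt F"
  unfolding kinetic_order_subspace_def by (intro CollectI exI[of _ "\<lambda>_. 0"]) simp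

lemma KOS_add: assumes "a \<in> kinetic_order_subspace A src tgt F" "b \<in> kinetic_order_subspace A src tgt F"
  shows "(\<lambda>s. a s + b s) \<in> kinetic_order_subspace A src tgt F"
proof -
  obtain c1 c2 where "a = (\<lambda>s. \<Sum>r\<in>A. c1 r * (kinetic_complex A src F (tgt r) s - kinetic_complex A src F (src r) s))"
    "b = (\<lambda>s. \<Sum>r\<in>A. c2 r * (kinetic_complex A src F (tgt r) s - kinetic_complex A src F (src r) s))"
    using assms unfolding kinetic_order_subspace_def by blast
  then show ?thesis unfolding kinetic_order_subspace_def
    by (intro CollectI exI[of _ "\<lambda>r. c1 r + c2 r"]) (simp add: sum.distrib distrib_right)
qed

lemma KOS_scale: assumes "a \<in> kinetic_order_subspace A src tgt F"
  shows "(\<lambda>s. c * a s) \<in> kinetic_order_subspace A src tgt F"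
proof -
  obtain c1 where "a = (\<lambda>s. \<Sum>r\<in>A. c1 r * (kinetic_complex A src F (tgt r) s - kinetic_complex A src F (src r) s))"
    using assms unfolding kinetic_order_subspace_def by blast
  then show ?thesis unfolding kinetic_order_subspace_def
    by (intro CollectI exI[of _ "\<lambda>r. c * c1 r"]) (simp add: sum_distrib_left mult.assoc)
qed

theorem theorem10:
  fixes R :: "'r set" and src tgt :: "'r \<Rightarrow> ('s::finite) complex"
    and k :: "'r \<Rightarrow> real" and F :: "'r \<Rightarrow> 's \<Rightarrow> real" and D :: "'r set set"
  assumes "finite R"
    and "PL_kinetics R k"
    and "is_decomposition R D"
    and "\<And>A. A \<in> D \<Longrightarrow> weakly_reversible A src tgt"
    and "\<And>A. A \<in> D \<Longrightarrow> complex_balanced A src tgt k F"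
    and "\<And>A. A \<in> D \<Longrightarrow> PL_RDK A src F"
    and "\<And>A. A \<in> D \<Longrightarrow> CLP A src tgt k F (kinetic_order_subspace A src tgt F)"
    and "incidence_independent R src tgt D"
    and "covering_independent src tgt F D"
  shows "weakly_reversible R src tgt \<and>
         CLP R src tgt k F (subspace_sum D (\<lambda>A. kinetic_order_subspace A src tgt F))"
proof
  have UD: "\<Union>D = R" and disj: "\<forall>A\<in>D. \<forall>B\<in>D. A \<noteq> B \<longrightarrow> A \<inter> B = {}"
    using assms(3) unfolding is_decomposition_def by auto
  show "weakly_reversible R src tgt" using wr_union[OF UD assms(4)] .
  let ?K = "\<lambda>A. kinetic_order_subspace A src tgt F"
  have finD: "finite D" using UD assms(1) by (metis finite_UnionD)
  have finA: "\<forall>A\<in>D. finite A" using UD assms(1) by (metis Union_upper finite_subset)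
  have inc_split: "incidence R src tgt v = (\<lambda>c. \<Sum>A\<in>D. incidence A src tgt v c)" for v
    unfolding incidence_def UD[symmetric]
    by (subst sum.Union_disjoint[OF finA disj]) simp
  have Zsplit: "Zplus R src tgt k F = {x. positive_vec x \<and> (\<forall>A\<in>D. x \<in> Zplus A src tgt k F)}"
  proof (intro set_eqI iffI)
    fix x assume x: "x \<in> Zplus R src tgt k F"
    let ?v = "\<lambda>A. incidence A src tgt (PL_rate k F x)"
    have c1: "\<forall>A\<in>D. ?v A \<in> incidence_image A src tgt" unfolding incidence_image_def by blast
    have c2: "(\<lambda>a. \<Sum>A\<in>D. ?v A a) = (\<lambda>_. 0)"
      using x inc_split[of "PL_rate k F x"] unfolding Zplus_def by simp
    have c3: "independent_family D (\<lambda>A. incidence_image A src tgt)"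
      using assms(8) unfolding incidence_independent_def is_direct_sum_def by blast
    have "\<forall>A\<in>D. ?v A = (\<lambda>_. 0)"
      using mp[OF spec[OF c3[unfolded independent_family_def], of ?v]] c1 c2 by blast
    then show "x \<in> {x. positive_vec x \<and> (\<forall>A\<in>D. x \<in> Zplus A src tgt k F)}"
      using x
      unfolding Zplus_def by blast
  next
    fix x assume "x \<in> {x. positive_vec x \<and> (\<forall>A\<in>D. x \<in> Zplus A src tgt k F)}"
    then show "x \<in> Zplus R src tgt k F" unfolding Zplus_def
      by (simp add: inc_split)
  qed
  have "\<forall>A\<in>D. \<exists>xa. xa \<in> Zplus A src tgt k F \<and>
      Zplus A src tgt k F = {x. positive_vec x \<and> (\<lambda>s. ln (x s) - ln (xa s)) \<in> orth (?K A)}"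
    using assms(7) unfolding CLP_def by blast
  from bchoice[OF this] obtain xa where xa0: "\<forall>A\<in>D. xa A \<in> Zplus A src tgt k F \<and>
      Zplus A src tgt k F = {x. positive_vec x \<and> (\<lambda>s. ln (x s) - ln (xa A s)) \<in> orth (?K A)}"
    by blast
  have xa: "\<And>A. A \<in> D \<Longrightarrow> xa A \<in> Zplus A src tgt k F"
    "\<And>A. A \<in> D \<Longrightarrow> Zplus A src tgt k F = {x. positive_vec x \<and> (\<lambda>s. ln (x s) - ln (xa A s)) \<in> orth (?K A)}"
    using xa0 by blast+
  have indK: "independent_family D ?K"
    using assms(9) unfolding covering_independent_def is_direct_sum_def by blast
  obtain y where y: "\<forall>A\<in>D. \<forall>w\<in>?K A. (\<Sum>s\<in>UNIV. y s * w s) = (\<Sum>s\<in>UNIV. ln (xa A s) * w s)"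
    using fun_ext_lemma[OF finD KOS_zero KOS_add KOS_scale indK, of "\<lambda>A s. ln (xa A s)"] by blast
  have orth_sum: "orth (subspace_sum D ?K) = {v. \<forall>A\<in>D. v \<in> orth (?K A)}"
  proof (intro set_eqI iffI)
    fix v assume v: "v \<in> orth (subspace_sum D ?K)"
    show "v \<in> {v. \<forall>A\<in>D. v \<in> orth (?K A)}"
    proof (clarsimp simp: orth_def)
      fix A p assume A: "A \<in> D" and p: "p \<in> ?K A"
      let ?w = "\<lambda>B. (\<lambda>a. if B = A then p a else 0)"
      have "\<forall>B\<in>D. ?w B \<in> ?K B"
      proof
        fix B assume "B \<in> D"
        show "?w B \<in> ?K B"
        proof (cases "B = A")
          case True then show ?thesis using p by simp
        next
          case False then show ?thesis using KOS_zero by simp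
        qed
      qed
      moreover have "p = (\<lambda>a. \<Sum>B\<in>D. ?w B a)"
        using A finD by (simp add: sum.delta)
      ultimately have "p \<in> subspace_sum D ?K" unfolding subspace_sum_def
        by (intro CollectI exI[of _ ?w]) simp
      then show "(\<Sum>s\<in>UNIV. v s * p s) = 0" using v unfolding orth_def by blast
    qed
  next
    fix v assume v: "v \<in> {v. \<forall>A\<in>D. v \<in> orth (?K A)}"
    show "v \<in> orth (subspace_sum D ?K)"
    proof (clarsimp simp: orth_def subspace_sum_def)
      fix w assume w: "\<forall>A\<in>D. w A \<in> ?K A"
      have "(\<Sum>s\<in>UNIV. v s * (\<Sum>A\<in>D. w A s)) = (\<Sum>A\<in>D. \<Sum>s\<in>UNIV. v s * w A s)"
        by (simp add: sum_distrib_left sum.swap[of _ UNIV D])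
      also have "\<dots> = 0" using v w unfolding orth_def by simp
      finally show "(\<Sum>s\<in>UNIV. v s * (\<Sum>A\<in>D. w A s)) = 0" .
    qed
  qed
  have key: "(\<lambda>s. f s - ln (xa A s)) \<in> orth (?K A) \<longleftrightarrow> (\<lambda>s. f s - y s) \<in> orth (?K A)"
    if A: "A \<in> D" for A f
  proof -
    have "(\<Sum>s\<in>UNIV. (f s - ln (xa A s)) * p s) = (\<Sum>s\<in>UNIV. (f s - y s) * p s)"
      if p: "p \<in> ?K A" for p
    proof -
      have "(\<Sum>s\<in>UNIV. (f s - ln (xa A s)) * p s) = (\<Sum>s\<in>UNIV. f s * p s) - (\<Sum>s\<in>UNIV. ln (xa A s) * p s)"
        by (simp add: left_diff_distrib sum_subtractf)
      also have "\<dots> = (\<Sum>s\<in>UNIV. f s * p s) - (\<Sum>s\<in>UNIV. y s * p s)" using y A p by simp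
      also have "\<dots> = (\<Sum>s\<in>UNIV. (f s - y s) * p s)"
        by (simp add: left_diff_distrib sum_subtractf)
      finally show ?thesis .
    qed
    then show ?thesis unfolding orth_def by auto
  qed
  define xs where "xs = (\<lambda>s. exp (y s))"
  have posxs: "positive_vec xs" unfolding positive_vec_def xs_def by simp
  have lnxs: "(\<lambda>s. ln (xs s)) = y" unfolding xs_def by simp
  have xsA: "xs \<in> Zplus A src tgt k F" if A: "A \<in> D" for A
  proof -
    have "(\<lambda>s. ln (xs s) - y s) \<in> orth (?K A)" unfolding orth_def xs_def by simp
    then have "(\<lambda>s. ln (xs s) - ln (xa A s)) \<in> orth (?K A)" using key[OF A, of "\<lambda>s. ln (xs s)"] by simp
    then show ?thesis using xa(2)[OF A] posxs by simp
  qed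
  have xsZ: "xs \<in> Zplus R src tgt k F" using Zsplit posxs xsA by blast
  have "Zplus R src tgt k F = {x. positive_vec x \<and> (\<lambda>s. ln (x s) - ln (xs s)) \<in> orth (subspace_sum D ?K)}"
  proof (intro set_eqI)
    fix x
    have "x \<in> Zplus R src tgt k F \<longleftrightarrow> positive_vec x \<and> (\<forall>A\<in>D. (\<lambda>s. ln (x s) - ln (xa A s)) \<in> orth (?K A))"
      using Zsplit xa(2) by auto
    also have "\<dots> \<longleftrightarrow> positive_vec x \<and> (\<forall>A\<in>D. (\<lambda>s. ln (x s) - y s) \<in> orth (?K A))"
      using key by auto
    also have "\<dots> \<longleftrightarrow> positive_vec x \<and> (\<lambda>s. ln (x s) - ln (xs s)) \<in> orth (subspace_sum D ?K)"
      using orth_sum by (simp add: xs_def)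
    finally show "x \<in> Zplus R src tgt k F \<longleftrightarrow> x \<in> {x. positive_vec x \<and> (\<lambda>s. ln (x s) - ln (xs s)) \<in> orth (subspace_sum D ?K)}"
      by simp
  qed
  then show "CLP R src tgt k F (subspace_sum D ?K)"
    unfolding CLP_def using xsZ by blast
qed

end
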